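(* Assume the geometric setup and uniform-amplitude model in the context, with $D_{\rm m}<D_{\rm b}$, $r>d_{\rm Fn}$, and $|\sin(\theta-\psi)|\ge c$ for a constant $c>0$. Let $D_{\rm m}^{\rm eff}=D_{\rm m}|\sin(\theta-\psi)|$. Then $$\|\mathbf{J}_\psi\|_{\mathsf F}^2=\frac{N_{\rm b}N_{\rm m}(D_{\rm m}^{\rm eff})^2}{48r^2}\Big(1+\frac{2}{N_{\rm m}-1}\Big)\big(1+\mathcal{O}(N_{\rm b}^{-1})\big),$$ and consequently, for any full-row-rank $\mathbf{Q}\in\mathbb{C}^{N_{\rm rf}\times N_{\rm b}}$ and $P_{\rm m},\sigma_{\rm o}^2>0$, the average Fisher information $\bar F_\psi=\frac{2P_{\rm m}}{\sigma_{\rm o}^2N_{\rm m}}\|\mathbf{P}_{\mathbf{Q}}\mathbf{J}_\psi\|_{\mathsf F}^2$ satisfies $$\bar F_\psi\le\frac{2P_{\rm m}}{\sigma_{\rm o}^2N_{\rm m}}\|\mathbf{J}_\psi\|_{\mathsf F}^2=\frac{P_{\rm m}N_{\rm b}(D_{\rm m}^{\rm eff})^2}{24\sigma_{\rm o}^2r^2}\Big(1+\frac{2}{N_{\rm m}-1}\Big)\big(1+\mathcal{O}(N_{\rm b}^{-1})\big).$$ Here $\mathcal{O}(N_{\rm b}^{-1})$ denotes a quantity bounded in absolute value by $C/N_{\rm b}$ with $C$ depending only on $c$, uniformly over $\lambda$, $N_{\rm m}$ and poses satisfying the hypotheses.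
   Context: Geometric setup: wavelength $\lambda>0$; BS and MS uniform linear arrays with odd numbers of antennas $N_{\rm b}=2\bar N_{\rm b}+1\ge3$ and $N_{\rm m}=2\bar N_{\rm m}+1\ge3$, spacings $d_{\rm b}=d_{\rm m}=\lambda/2$, apertures $D_{\rm b}=(N_{\rm b}-1)d_{\rm b}$, $D_{\rm m}=(N_{\rm m}-1)d_{\rm m}$. BS antenna $n_{\rm b}\in\{-\bar N_{\rm b},\dots,\bar N_{\rm b}\}$ sits at $(0,n_{\rm b}d_{\rm b})$; for MS pose $(x,y,\psi)$, MS antenna $n_{\rm m}\in\{-\bar N_{\rm m},\dots,\bar N_{\rm m}\}$ sits at $(x+n_{\rm m}d_{\rm m}\cos\psi,\;y+n_{\rm m}d_{\rm m}\sin\psi)$, and $r_{n_{\rm b},n_{\rm m}}=\sqrt{(x+n_{\rm m}d_{\rm m}\cos\psi)^2+(y+n_{\rm m}d_{\rm m}\sin\psi-n_{\rm b}d_{\rm b})^2}$. Let $r=\sqrt{x^2+y^2}>0$ and $\theta$ be the polar angle with $x=r\cos\theta$, $y=r\sin\theta$. Fresnel distance: $d_{\rm Fn}=0.62\sqrt{D_{\rm b}^3/\lambda}$. Uniform-amplitude channel: $\mathbf{H}\in\mathbb{C}^{N_{\rm b}\times N_{\rm m}}$ with rows indexed by $n_{\rm b}$ and columns by $n_{\rm m}$ (both increasing), entries $h_{n_{\rm b},n_{\rm m}}=\frac{\lambda}{4\pi r}e^{-{\rm j}\frac{2\pi}{\lambda}r_{n_{\rm b},n_{\rm m}}}$. Let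 $\eta=-\big(\frac1r+{\rm j}\frac{2\pi}{\lambda}\big)$. The channel derivatives under the uniform-amplitude approximation are the matrices with entries $[\mathbf{J}_x]_{n_{\rm b},n_{\rm m}}=\eta\frac{x+n_{\rm m}d_{\rm m}\cos\psi}{r}h_{n_{\rm b},n_{\rm m}}$, $[\mathbf{J}_y]_{n_{\rm b},n_{\rm m}}=\eta\frac{y+n_{\rm m}d_{\rm m}\sin\psi-n_{\rm b}d_{\rm b}}{r}h_{n_{\rm b},n_{\rm m}}$, and $\mathbf{J}_\psi=-d_{\rm m}\sin\psi\,\mathbf{J}_x\mathbf{D}_{N_{\rm m}}+d_{\rm m}\cos\psi\,\mathbf{J}_y\mathbf{D}_{N_{\rm m}}$, with $\mathbf{D}_{N_{\rm m}}=\mathrm{diag}(-\bar N_{\rm m},\dots,0,\dots,\bar N_{\rm m})$. $\mathbf{P}_{\mathbf{Q}}=\mathbf{Q}^{\mathsf H}(\mathbf{Q}\mathbf{Q}^{\mathsf H})^{-1}\mathbf{Q}$; $\|\cdot\|_{\mathsf F}$ is the Frobenius norm. *)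

theory Defs
  imports Complex_Main
    "Jordan_Normal_Form.Schur_Decomposition"
    "Jordan_Normal_Form.DL_Rank"
    "Jordan_Normal_Form.Gauss_Jordan_Elimination"
begin

text \<open>Geometry.  Array sizes are N = 2*Nbar+1.  The antenna index n ranges over
  -Nbar..Nbar; row/column i of a matrix (i = 0..N-1) corresponds to n = i - Nbar.\<close>

definition ant_idx :: "nat \<Rightarrow> nat \<Rightarrow> real" where
  "ant_idx Nbar i = real_of_int (int i - int Nbar)"

definition spacing :: "real \<Rightarrow> real" where
  "spacing lam = lam / 2"

definition aperture :: "real \<Rightarrow> nat \<Rightarrow> real" where
  "aperture lam Nbar = (real (2 * Nbar + 1) - 1) * spacing lam"

definition fresnel_dist :: "real \<Rightarrow> nat \<Rightarrow> real" where
  "fresnel_dist lam Nbb = 0.62 * sqrt (aperture lam Nbb ^ 3 / lam)"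

definition dist_r :: "real \<Rightarrow> real \<Rightarrow> real" where
  "dist_r x y = sqrt (x\<^sup>2 + y\<^sup>2)"

definition ant_dist :: "real \<Rightarrow> real \<Rightarrow> real \<Rightarrow> real \<Rightarrow> real \<Rightarrow> real \<Rightarrow> real" where
  "ant_dist lam x y psi nb nm =
     sqrt ((x + nm * spacing lam * cos psi)\<^sup>2 + (y + nm * spacing lam * sin psi - nb * spacing lam)\<^sup>2)"

definition chan :: "real \<Rightarrow> real \<Rightarrow> real \<Rightarrow> real \<Rightarrow> real \<Rightarrow> real \<Rightarrow> complex" where
  "chan lam x y psi nb nm =
     complex_of_real (lam / (4 * pi * dist_r x y)) *
     exp (- \<i> * complex_of_real (2 * pi / lam * ant_dist lam x y psi nb nm))"

definition eta :: "real \<Rightarrow> real \<Rightarrow> real \<Rightarrow> complex" where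
  "eta lam x y = - (complex_of_real (1 / dist_r x y) + \<i> * complex_of_real (2 * pi / lam))"

definition J_x :: "real \<Rightarrow> nat \<Rightarrow> nat \<Rightarrow> real \<Rightarrow> real \<Rightarrow> real \<Rightarrow> complex mat" where
  "J_x lam Nbb Nmb x y psi = mat (2 * Nbb + 1) (2 * Nmb + 1) (\<lambda>(i, j).
     let nb = ant_idx Nbb i; nm = ant_idx Nmb j in
     eta lam x y * complex_of_real ((x + nm * spacing lam * cos psi) / dist_r x y)
       * chan lam x y psi nb nm)"

definition J_y :: "real \<Rightarrow> nat \<Rightarrow> nat \<Rightarrow> real \<Rightarrow> real \<Rightarrow> real \<Rightarrow> complex mat" where
  "J_y lam Nbb Nmb x y psi = mat (2 * Nbb + 1) (2 * Nmb + 1) (\<lambda>(i, j).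
     let nb = ant_idx Nbb i; nm = ant_idx Nmb j in
     eta lam x y * complex_of_real ((y + nm * spacing lam * sin psi - nb * spacing lam) / dist_r x y)
       * chan lam x y psi nb nm)"

definition D_mat :: "nat \<Rightarrow> complex mat" where
  "D_mat Nmb = mat (2 * Nmb + 1) (2 * Nmb + 1)
     (\<lambda>(i, j). if i = j then complex_of_real (ant_idx Nmb i) else 0)"

definition J_psi :: "real \<Rightarrow> nat \<Rightarrow> nat \<Rightarrow> real \<Rightarrow> real \<Rightarrow> real \<Rightarrow> complex mat" where
  "J_psi lam Nbb Nmb x y psi =
     complex_of_real (- spacing lam * sin psi) \<cdot>\<^sub>m (J_x lam Nbb Nmb x y psi * D_mat Nmb)
     + complex_of_real (spacing lam * cos psi) \<cdot>\<^sub>m (J_y lam Nbb Nmb x y psi * D_mat Nmb)"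

definition frob_sq :: "complex mat \<Rightarrow> real" where
  "frob_sq A = (\<Sum>i<dim_row A. \<Sum>j<dim_col A. (cmod (A $$ (i, j)))\<^sup>2)"

definition proj_Q :: "complex mat \<Rightarrow> complex mat" where
  "proj_Q Q = mat_adjoint Q * the (mat_inverse (Q * mat_adjoint Q)) * Q"

definition full_row_rank :: "complex mat \<Rightarrow> bool" where
  "full_row_rank Q \<longleftrightarrow> vec_space.rank (dim_row Q) Q = dim_row Q"

end

theory Submission
  imports Defs
begin

lemma adj_dims[simp]: "dim_row (mat_adjoint A) = dim_col A" "dim_col (mat_adjoint A) = dim_row A"
  unfolding mat_adjoint_def by auto
lemma adj_index[simp]: "j < dim_col A \<Longrightarrow> i < dim_row A \<Longrightarrow> mat_adjoint (A::complex mat) $$ (j,i) = cnj (A $$ (i,j))"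
  unfolding mat_adjoint_def by (simp add: mat_of_rows_index)
lemma adj_carrier: "A \<in> carrier_mat n m \<Longrightarrow> mat_adjoint A \<in> carrier_mat m n" by auto
lemma adj_adj: "mat_adjoint (mat_adjoint (A::complex mat)) = A"
  by (rule eq_matI) auto
lemma adj_one: "mat_adjoint (1\<^sub>m n :: complex mat) = 1\<^sub>m n"
  by (rule eq_matI) auto
lemma adj_mult: assumes "(A::complex mat) \<in> carrier_mat n k" "B \<in> carrier_mat k m"
  shows "mat_adjoint (A*B) = mat_adjoint B * mat_adjoint A"
proof (rule eq_matI)
  fix i j assume ij: "i < dim_row (mat_adjoint B * mat_adjoint A)" "j < dim_col (mat_adjoint B * mat_adjoint A)"
  then have i: "i < m" and j: "j < n" using assms by auto
  have "mat_adjoint (A*B) $$ (i,j) = cnj (\<Sum>l<k. A $$ (j,l) * B $$ (l,i))"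
    using assms i j by (simp add: scalar_prod_def atLeast0LessThan)
  also have "\<dots> = (\<Sum>l<k. cnj (B $$ (l,i)) * cnj (A $$ (j,l)))"
    by (simp add: cnj_sum mult.commute)
  also have "\<dots> = (mat_adjoint B * mat_adjoint A) $$ (i,j)"
    using assms i j by (simp add: scalar_prod_def atLeast0LessThan)
  finally show "mat_adjoint (A*B) $$ (i,j) = (mat_adjoint B * mat_adjoint A) $$ (i,j)" .
qed (use assms in auto)
lemma full_rank_span:
  assumes Q: "(Q::complex mat) \<in> carrier_mat n m" and rk: "vec_space.rank n Q = n"
    and v: "v \<in> carrier_vec n"
  shows "\<exists>a. v = module.lincomb (module_vec TYPE(complex) n) a (set (cols Q))"
proof -
  interpret vs: vec_space "TYPE(complex)" n .
  obtain S where S: "maximal S (\<lambda>T. T \<subseteq> set (cols Q) \<and> vs.lin_indpt T)"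
    using maximal_exists[of "(\<lambda>T. T \<subseteq> set (cols Q) \<and> vs.lin_indpt T)" "card (set (cols Q))" "{}"]
    by (meson List.finite_set card_mono empty_iff empty_subsetI vs.finite_lin_indpt2 rev_finite_subset)
  have rS: "vs.rank Q = card S" using vs.rank_card_indpt[OF Q S] .
  have Ssub: "S \<subseteq> set (cols Q)" and li: "vs.lin_indpt S" using S unfolding maximal_def by auto
  have colsc: "set (cols Q) \<subseteq> carrier_vec n" using Q cols_dim by blast
  have fS: "finite S" using Ssub finite_subset by blast
  have "vs.basis S"
  proof (rule vs.dim_li_is_basis)
    show "card S \<ge> vs.dim" using rS rk vs.dim_is_n by simp
  qed (use fS Ssub colsc li in auto)
  then have "vs.span S = carrier_vec n" unfolding vs.basis_def by auto
  moreover have "vs.span S \<subseteq> vs.span (set (cols Q))" by (rule vs.span_is_monotone[OF Ssub])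
  ultimately have "v \<in> vs.span (set (cols Q))" using v by auto
  then show ?thesis using vs.finite_span[OF _ colsc] by auto
qed

lemma sum_cnj_zero:
  assumes "finite A" "(\<Sum>x\<in>A. cnj (f x) * f x) = (0::complex)"
  shows "\<forall>x\<in>A. f x = 0"
proof -
  have "(\<Sum>x\<in>A. cnj (f x) * f x) = complex_of_real (\<Sum>x\<in>A. (cmod (f x))\<^sup>2)"
  proof -
    have e: "cnj z * z = complex_of_real ((cmod z)\<^sup>2)" for z
      by (subst complex_norm_square) (rule mult.commute)
    show ?thesis by (simp only: e of_real_sum)
  qed
  then have "(\<Sum>x\<in>A. (cmod (f x))\<^sup>2) = 0" using assms(2) by (metis of_real_eq_0_iff)
  then have "\<forall>x\<in>A. (cmod (f x))\<^sup>2 = 0"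
    using sum_nonneg_eq_0_iff[OF assms(1), of "\<lambda>x. (cmod (f x))\<^sup>2"] by simp
  then show ?thesis by auto
qed

lemma QQH_det:
  assumes Q: "(Q::complex mat) \<in> carrier_mat n m" and rk: "vec_space.rank n Q = n"
  shows "det (Q * mat_adjoint Q) \<noteq> 0"
proof
  assume d0: "det (Q * mat_adjoint Q) = 0"
  have QQ: "Q * mat_adjoint Q \<in> carrier_mat n n" using Q by auto
  obtain v where v: "v \<in> carrier_vec n" "v \<noteq> 0\<^sub>v n" "(Q * mat_adjoint Q) *\<^sub>v v = 0\<^sub>v n"
    using det_0_iff_vec_prod_zero_field[OF QQ] d0 by auto
  define w where "w = mat_adjoint Q *\<^sub>v v"
  have Qw: "Q *\<^sub>v w = 0\<^sub>v n" unfolding w_def using assoc_mult_mat_vec[of Q n m "mat_adjoint Q" n v] Q v adj_carrier[OF Q] by auto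
  have wj: "w $ j = (\<Sum>i<n. cnj (Q $$ (i,j)) * v $ i)" if "j < m" for j
    unfolding w_def using that Q v by (simp add: scalar_prod_def atLeast0LessThan row_def)
  have Qwi: "(Q *\<^sub>v w) $ i = (\<Sum>j<m. Q $$ (i,j) * w $ j)" if "i < n" for i
    using that Q by (simp add: scalar_prod_def atLeast0LessThan w_def)
  have "(\<Sum>j<m. cnj (w$j) * w$j) = (\<Sum>j<m. (\<Sum>i<n. Q $$ (i,j) * cnj (v $ i)) * w$j)"
    by (rule sum.cong) (auto simp: wj cnj_sum)
  also have "\<dots> = (\<Sum>j<m. \<Sum>i<n. cnj (v$i) * (Q $$ (i,j) * w $ j))"
    by (intro sum.cong refl) (subst sum_distrib_right, intro sum.cong refl, simp add: mult_ac)
  also have "\<dots> = (\<Sum>i<n. \<Sum>j<m. cnj (v$i) * (Q $$ (i,j) * w $ j))"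
    by (rule sum.swap)
  also have "\<dots> = (\<Sum>i<n. cnj (v$i) * (\<Sum>j<m. Q $$ (i,j) * w $ j))"
    by (simp add: sum_distrib_left)
  also have "\<dots> = (\<Sum>i<n. cnj (v$i) * (Q *\<^sub>v w) $ i)"
    by (rule sum.cong) (auto simp: Qwi)
  also have "\<dots> = 0" using Qw by simp
  finally have "\<forall>j\<in>{..<m}. w $ j = 0" by (intro sum_cnj_zero) auto
  then have orth: "(\<Sum>i<n. cnj (v$i) * Q $$ (i,j)) = 0" if "j < m" for j
  proof -
    have "cnj (w $ j) = 0" using that \<open>\<forall>j\<in>{..<m}. w $ j = 0\<close> by auto
    then show ?thesis by (simp add: wj[OF that] cnj_sum mult.commute)
  qed
  interpret vs: vec_space "TYPE(complex)" n .
  obtain a where va: "v = vs.lincomb a (set (cols Q))" using full_rank_span[OF Q rk v(1)] by auto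
  have colsc: "set (cols Q) \<subseteq> carrier_vec n" using Q cols_dim by blast
  have vi: "v $ i = (\<Sum>x\<in>set (cols Q). a x * x $ i)" if "i < n" for i
    using va vs.lincomb_index[OF that colsc] by simp
  have "(\<Sum>i<n. cnj (v$i) * v$i) = (\<Sum>i<n. cnj (v$i) * (\<Sum>x\<in>set (cols Q). a x * x $ i))"
    by (rule sum.cong) (auto simp: vi)
  also have "\<dots> = (\<Sum>i<n. \<Sum>x\<in>set (cols Q). a x * (cnj (v$i) * x $ i))"
    by (intro sum.cong refl) (subst sum_distrib_left, intro sum.cong refl, simp add: mult_ac)
  also have "\<dots> = (\<Sum>x\<in>set (cols Q). \<Sum>i<n. a x * (cnj (v$i) * x $ i))"
    by (rule sum.swap)
  also have "\<dots> = (\<Sum>x\<in>set (cols Q). a x * (\<Sum>i<n. cnj (v$i) * x $ i))"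
    by (simp add: sum_distrib_left)
  also have "\<dots> = 0"
  proof (rule sum.neutral, rule ballI)
    fix x assume "x \<in> set (cols Q)"
    then obtain j where j: "j < m" "x = col Q j" using Q by (auto simp: cols_def)
    have "(\<Sum>i<n. cnj (v$i) * x $ i) = (\<Sum>i<n. cnj (v$i) * Q $$ (i,j))"
      by (rule sum.cong) (use j Q in auto)
    then show "a x * (\<Sum>i<n. cnj (v$i) * x $ i) = 0" using orth[OF j(1)] by simp
  qed
  finally have "\<forall>i\<in>{..<n}. v $ i = 0" by (intro sum_cnj_zero) auto
  then have "v = 0\<^sub>v n" using v(1) by (intro eq_vecI) auto
  then show False using v(2) by simp
qed

lemma mult_entry: "A \<in> carrier_mat n k \<Longrightarrow> B \<in> carrier_mat k m \<Longrightarrow> i < n \<Longrightarrow> j < m \<Longrightarrow>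
   (A * B) $$ (i,j) = (\<Sum>l<k. A $$ (i,l) * B $$ (l,j))"
  by (simp add: scalar_prod_def atLeast0LessThan)

lemma cmod_add_sq: "(cmod (y + z))\<^sup>2 = (cmod y)\<^sup>2 + (cmod z)\<^sup>2 + 2 * Re (cnj y * z)"
  unfolding cmod_power2 by (simp add: algebra_simps power2_eq_square)

lemma inverse_exists:
  assumes Q: "(Q::complex mat) \<in> carrier_mat k m" and fr: "full_row_rank Q"
  shows "\<exists>B. mat_inverse (Q * mat_adjoint Q) = Some B \<and> Q * mat_adjoint Q * B = 1\<^sub>m k
     \<and> B * (Q * mat_adjoint Q) = 1\<^sub>m k \<and> B \<in> carrier_mat k k"
proof -
  have A: "Q * mat_adjoint Q \<in> carrier_mat k k" using Q by auto
  have rk: "vec_space.rank k Q = k" using fr Q unfolding full_row_rank_def by auto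
  have d: "det (Q * mat_adjoint Q) \<noteq> 0" by (rule QQH_det[OF Q rk])
  have U: "Q * mat_adjoint Q \<in> Units (ring_mat TYPE(complex) k ())" by (rule det_non_zero_imp_unit[OF A d])
  show ?thesis
  proof (cases "mat_inverse (Q * mat_adjoint Q)")
    case None
    then show ?thesis using mat_inverse(1)[OF A None, of "()"] U by auto
  next
    case (Some B)
    then show ?thesis using mat_inverse(2)[OF A Some] by auto
  qed
qed

lemma proj_props:
  assumes Q: "(Q::complex mat) \<in> carrier_mat k m" and fr: "full_row_rank Q"
  shows "proj_Q Q \<in> carrier_mat m m" "mat_adjoint (proj_Q Q) = proj_Q Q" "proj_Q Q * proj_Q Q = proj_Q Q"
proof -
  obtain B where B: "mat_inverse (Q * mat_adjoint Q) = Some B" "Q * mat_adjoint Q * B = 1\<^sub>m k"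
     "B * (Q * mat_adjoint Q) = 1\<^sub>m k" "B \<in> carrier_mat k k" using inverse_exists[OF Q fr] by blast
  have QH: "mat_adjoint Q \<in> carrier_mat m k" using Q by auto
  have P: "proj_Q Q = mat_adjoint Q * B * Q" unfolding proj_Q_def using B by simp
  show "proj_Q Q \<in> carrier_mat m m" using P QH B Q by auto
  have AH: "mat_adjoint (Q * mat_adjoint Q) = Q * mat_adjoint Q"
    using adj_mult[OF Q QH] adj_adj by simp
  have "mat_adjoint B * (Q * mat_adjoint Q) = 1\<^sub>m k"
    using adj_mult[of "Q * mat_adjoint Q" k k B k] B Q QH AH adj_one by auto
  then have BH: "mat_adjoint B = B"
  proof -
    assume h: "mat_adjoint B * (Q * mat_adjoint Q) = 1\<^sub>m k"
    have BHc: "mat_adjoint B \<in> carrier_mat k k" using B(4) by auto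
    have A: "Q * mat_adjoint Q \<in> carrier_mat k k" using Q by auto
    have "mat_adjoint B = mat_adjoint B * (Q * mat_adjoint Q * B)" using B(2) right_mult_one_mat[OF BHc] by simp
    also have "\<dots> = mat_adjoint B * (Q * mat_adjoint Q) * B" using assoc_mult_mat[OF BHc A B(4)] by simp
    also have "\<dots> = B" using h B(4) by simp
    finally show ?thesis .
  qed
  define X where "X = mat_adjoint Q * B"
  have Xc: "X \<in> carrier_mat m k" unfolding X_def using QH B(4) by auto
  have P2: "proj_Q Q = X * Q" unfolding P X_def ..
  have "mat_adjoint (X * Q) = mat_adjoint Q * mat_adjoint X" by (rule adj_mult[OF Xc Q])
  also have "mat_adjoint X = B * Q" unfolding X_def using adj_mult[OF QH B(4)] BH adj_adj by simp
  also have "mat_adjoint Q * (B * Q) = X * Q" unfolding X_def using assoc_mult_mat[OF QH B(4) Q] by simp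
  finally show "mat_adjoint (proj_Q Q) = proj_Q Q" unfolding P2 .
  have QX: "Q * X = 1\<^sub>m k" unfolding X_def using assoc_mult_mat[OF Q QH B(4)] B(2) by simp
  have XQc: "X * Q \<in> carrier_mat m m" using Xc Q by auto
  have "X * Q * (X * Q) = X * (Q * (X * Q))" by (rule assoc_mult_mat[OF Xc Q XQc])
  also have "Q * (X * Q) = Q * X * Q" using assoc_mult_mat[OF Q Xc Q] by simp
  also have "\<dots> = Q" using QX Q by simp
  finally show "proj_Q Q * proj_Q Q = proj_Q Q" unfolding P2 .
qed

lemma frob_proj_le:
  assumes Pc: "(P::complex mat) \<in> carrier_mat m m" and PH: "mat_adjoint P = P" and PP: "P * P = P"
    and Jc: "J \<in> carrier_mat m p"
  shows "frob_sq (P * J) \<le> frob_sq J"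
proof -
  define Y where "Y = P * J"
  have Yc: "Y \<in> carrier_mat m p" unfolding Y_def using Pc Jc by auto
  have herm: "cnj (P $$ (i,l)) = P $$ (l,i)" if "i < m" "l < m" for i l
  proof -
    have "mat_adjoint P $$ (l,i) = cnj (P $$ (i,l))" using that Pc by simp
    then show ?thesis using PH by simp
  qed
  have PY: "P * Y = Y" unfolding Y_def using assoc_mult_mat[OF Pc Pc Jc] PP by simp
  have Yij: "Y $$ (i,j) = (\<Sum>l<m. P $$ (i,l) * J $$ (l,j))" if "i < m" "j < p" for i j
    unfolding Y_def by (rule mult_entry[OF Pc Jc that])
  have PYij: "Y $$ (i,j) = (\<Sum>l<m. P $$ (i,l) * Y $$ (l,j))" if "i < m" "j < p" for i j
    using mult_entry[OF Pc Yc that] PY by simp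
  have orth: "(\<Sum>i<m. cnj (Y $$ (i,j)) * (J $$ (i,j) - Y $$ (i,j))) = 0" if j: "j < p" for j
  proof -
    have "(\<Sum>i<m. cnj (Y $$ (i,j)) * (J $$ (i,j) - Y $$ (i,j)))
        = (\<Sum>i<m. (\<Sum>l<m. P $$ (l,i) * cnj (J $$ (l,j))) * (J $$ (i,j) - Y $$ (i,j)))"
      by (intro sum.cong refl) (simp add: Yij j cnj_sum herm)
    also have "\<dots> = (\<Sum>i<m. \<Sum>l<m. cnj (J $$ (l,j)) * (P $$ (l,i) * (J $$ (i,j) - Y $$ (i,j))))"
      by (intro sum.cong refl) (subst sum_distrib_right, intro sum.cong refl, simp add: mult_ac)
    also have "\<dots> = (\<Sum>l<m. \<Sum>i<m. cnj (J $$ (l,j)) * (P $$ (l,i) * (J $$ (i,j) - Y $$ (i,j))))"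
      by (rule sum.swap)
    also have "\<dots> = (\<Sum>l<m. cnj (J $$ (l,j)) * (\<Sum>i<m. P $$ (l,i) * (J $$ (i,j) - Y $$ (i,j))))"
      by (simp add: sum_distrib_left)
    also have "\<dots> = (\<Sum>l<m. cnj (J $$ (l,j)) * (Y $$ (l,j) - Y $$ (l,j)))"
    proof (intro sum.cong refl)
      fix l assume l: "l \<in> {..<m}"
      have "(\<Sum>i<m. P $$ (l,i) * (J $$ (i,j) - Y $$ (i,j)))
          = (\<Sum>i<m. P $$ (l,i) * J $$ (i,j)) - (\<Sum>i<m. P $$ (l,i) * Y $$ (i,j))"
        by (simp add: right_diff_distrib sum_subtractf)
      also have "\<dots> = Y $$ (l,j) - Y $$ (l,j)" using Yij[of l j] PYij[of l j] l j by simp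
      finally show "cnj (J $$ (l,j)) * (\<Sum>i<m. P $$ (l,i) * (J $$ (i,j) - Y $$ (i,j)))
          = cnj (J $$ (l,j)) * (Y $$ (l,j) - Y $$ (l,j))" by simp
    qed
    also have "\<dots> = 0" by simp
    finally show ?thesis .
  qed
  have "frob_sq J = (\<Sum>i<m. \<Sum>j<p. (cmod (Y $$ (i,j) + (J $$ (i,j) - Y $$ (i,j))))\<^sup>2)"
    unfolding frob_sq_def using Jc by simp
  also have "\<dots> = (\<Sum>i<m. \<Sum>j<p. (cmod (Y $$ (i,j)))\<^sup>2 + (cmod (J $$ (i,j) - Y $$ (i,j)))\<^sup>2
        + 2 * Re (cnj (Y $$ (i,j)) * (J $$ (i,j) - Y $$ (i,j))))"
    by (simp only: cmod_add_sq)
  also have "\<dots> \<ge> (\<Sum>i<m. \<Sum>j<p. (cmod (Y $$ (i,j)))\<^sup>2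
        + 2 * Re (cnj (Y $$ (i,j)) * (J $$ (i,j) - Y $$ (i,j))))"
    by (intro sum_mono) simp
  also have "(\<Sum>i<m. \<Sum>j<p. (cmod (Y $$ (i,j)))\<^sup>2
        + 2 * Re (cnj (Y $$ (i,j)) * (J $$ (i,j) - Y $$ (i,j))))
      = frob_sq Y + 2 * Re (\<Sum>j<p. \<Sum>i<m. cnj (Y $$ (i,j)) * (J $$ (i,j) - Y $$ (i,j)))"
    unfolding frob_sq_def using Yc
    by (simp add: sum.distrib sum_distrib_left Re_sum sum.swap[of _ "{..<p}"])
  also have "(\<Sum>j<p. \<Sum>i<m. cnj (Y $$ (i,j)) * (J $$ (i,j) - Y $$ (i,j))) = 0"
    using orth by simp
  finally show ?thesis unfolding Y_def by simp
qed


lemma sumsq_gen: "(\<Sum>i<M. (a + b * real i)\<^sup>2) =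
   real M * a\<^sup>2 + a * b * real M * (real M - 1) + b\<^sup>2 * real M * (real M - 1) * (2 * real M - 1) / 6"
proof (induction M)
  case 0
  then show ?case by simp
next
  case (Suc M)
  have "(\<Sum>i<Suc M. (a + b * real i)\<^sup>2) = (\<Sum>i<M. (a + b * real i)\<^sup>2) + (a + b * real M)\<^sup>2"
    by (rule sum.lessThan_Suc)
  also note Suc.IH
  finally show ?case by (simp add: power2_eq_square field_simps)
qed

lemma sumsq_sym: "(\<Sum>i<2*N+1. (a + b * ant_idx N i)\<^sup>2) =
   real (2*N+1) * a\<^sup>2 + b\<^sup>2 * real N * (real N + 1) * real (2*N+1) / 3"
proof -
  have "(\<Sum>i<2*N+1. (a + b * ant_idx N i)\<^sup>2) = (\<Sum>i<2*N+1. ((a - b * real N) + b * real i)\<^sup>2)"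
    by (intro sum.cong refl) (simp add: ant_idx_def algebra_simps)
  also have "\<dots> = real (2*N+1) * (a - b * real N)\<^sup>2 + (a - b * real N) * b * real (2*N+1) * (real (2*N+1) - 1)
     + b\<^sup>2 * real (2*N+1) * (real (2*N+1) - 1) * (2 * real (2*N+1) - 1) / 6"
    by (rule sumsq_gen)
  also have "\<dots> = real (2*N+1) * a\<^sup>2 + b\<^sup>2 * real N * (real N + 1) * real (2*N+1) / 3"
    by (simp add: power2_eq_square field_simps)
  finally show ?thesis .
qed

lemma D_carrier: "D_mat N \<in> carrier_mat (2*N+1) (2*N+1)" unfolding D_mat_def by auto

lemma mult_D_entry:
  assumes "A \<in> carrier_mat n (2*N+1)" "i < n" "j < 2*N+1"
  shows "(A * D_mat N) $$ (i,j) = A $$ (i,j) * complex_of_real (ant_idx N j)"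
proof -
  have "(A * D_mat N) $$ (i,j) = (\<Sum>l<2*N+1. A $$ (i,l) * D_mat N $$ (l,j))"
    by (rule mult_entry[OF assms(1) D_carrier assms(2,3)])
  also have "\<dots> = (\<Sum>l<2*N+1. if l = j then A $$ (i,j) * complex_of_real (ant_idx N j) else 0)"
    by (intro sum.cong refl) (use assms(3) in \<open>auto simp: D_mat_def\<close>)
  also have "\<dots> = A $$ (i,j) * complex_of_real (ant_idx N j)" using assms(3) by simp
  finally show ?thesis .
qed

lemma Jx_carrier: "J_x lam Nbb Nmb x y psi \<in> carrier_mat (2*Nbb+1) (2*Nmb+1)" unfolding J_x_def by auto
lemma Jy_carrier: "J_y lam Nbb Nmb x y psi \<in> carrier_mat (2*Nbb+1) (2*Nmb+1)" unfolding J_y_def by auto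
lemma Jpsi_carrier: "J_psi lam Nbb Nmb x y psi \<in> carrier_mat (2*Nbb+1) (2*Nmb+1)"
  unfolding J_psi_def using Jx_carrier Jy_carrier D_carrier by (metis add_carrier_mat mult_carrier_mat smult_carrier_mat)

lemma Jpsi_entry:
  assumes i: "i < 2*Nbb+1" and j: "j < 2*Nmb+1"
  shows "J_psi lam Nbb Nmb x y psi $$ (i,j) = eta lam x y * chan lam x y psi (ant_idx Nbb i) (ant_idx Nmb j)
     * complex_of_real (ant_idx Nmb j * spacing lam * (cos psi * y - sin psi * x - ant_idx Nbb i * spacing lam * cos psi) / dist_r x y)"
proof -
  let ?nb = "ant_idx Nbb i" and ?nm = "ant_idx Nmb j" and ?d = "spacing lam" and ?r = "dist_r x y"
  let ?e = "eta lam x y" and ?h = "chan lam x y psi (ant_idx Nbb i) (ant_idx Nmb j)"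
  have X: "(J_x lam Nbb Nmb x y psi * D_mat Nmb) $$ (i,j) = ?e * complex_of_real ((x + ?nm * ?d * cos psi) / ?r) * ?h * complex_of_real ?nm"
    using mult_D_entry[OF Jx_carrier i j] i j by (simp add: J_x_def Let_def)
  have Y: "(J_y lam Nbb Nmb x y psi * D_mat Nmb) $$ (i,j) = ?e * complex_of_real ((y + ?nm * ?d * sin psi - ?nb * ?d) / ?r) * ?h * complex_of_real ?nm"
    using mult_D_entry[OF Jy_carrier i j] i j by (simp add: J_y_def Let_def)
  have c1: "J_x lam Nbb Nmb x y psi * D_mat Nmb \<in> carrier_mat (2*Nbb+1) (2*Nmb+1)" using Jx_carrier D_carrier by (metis mult_carrier_mat)
  have c2: "J_y lam Nbb Nmb x y psi * D_mat Nmb \<in> carrier_mat (2*Nbb+1) (2*Nmb+1)" using Jy_carrier D_carrier by (metis mult_carrier_mat)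
  have "J_psi lam Nbb Nmb x y psi $$ (i,j) = complex_of_real (- ?d * sin psi) * ((J_x lam Nbb Nmb x y psi * D_mat Nmb) $$ (i,j))
      + complex_of_real (?d * cos psi) * ((J_y lam Nbb Nmb x y psi * D_mat Nmb) $$ (i,j))"
  proof -
    have d: "dim_row (J_y lam Nbb Nmb x y psi * D_mat Nmb) = 2*Nbb+1" "dim_col (J_y lam Nbb Nmb x y psi * D_mat Nmb) = 2*Nmb+1"
      "dim_row (J_x lam Nbb Nmb x y psi * D_mat Nmb) = 2*Nbb+1" "dim_col (J_x lam Nbb Nmb x y psi * D_mat Nmb) = 2*Nmb+1"
      using c1 c2 by auto
    show ?thesis unfolding J_psi_def
      by (subst index_add_mat(1)) (use d i j in auto)
  qed
  also have "\<dots> = ?e * ?h * complex_of_real (- ?d * sin psi * ((x + ?nm * ?d * cos psi) / ?r) * ?nm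
      + ?d * cos psi * ((y + ?nm * ?d * sin psi - ?nb * ?d) / ?r) * ?nm)"
    unfolding X Y by (simp add: algebra_simps)
  also have "- ?d * sin psi * ((x + ?nm * ?d * cos psi) / ?r) * ?nm
      + ?d * cos psi * ((y + ?nm * ?d * sin psi - ?nb * ?d) / ?r) * ?nm
      = ?nm * ?d * (cos psi * y - sin psi * x - ?nb * ?d * cos psi) / ?r"
    by (simp add: divide_inverse algebra_simps)
  finally show ?thesis .
qed

lemma cmod_eta_sq: "(cmod (eta lam x y))\<^sup>2 = 1 / (dist_r x y)\<^sup>2 + (2 * pi / lam)\<^sup>2"
  unfolding eta_def cmod_power2 by (simp add: power_divide)

lemma cmod_chan: assumes "lam > 0" "dist_r x y > 0"
  shows "cmod (chan lam x y psi nb nm) = lam / (4 * pi * dist_r x y)"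
proof -
  have "cmod (exp (- \<i> * complex_of_real t)) = 1" for t by (simp add: norm_exp_eq_Re)
  then show ?thesis unfolding chan_def norm_mult norm_of_real using assms by simp
qed

lemma resh: "(r::real) > 0 \<Longrightarrow> A * B * (n * d * (g - b * d * c) / r)\<^sup>2 = (A * B * d\<^sup>2 / r\<^sup>2) * n\<^sup>2 * (g + (-d*c) * b)\<^sup>2"
  by (simp add: field_simps power2_eq_square)

lemma entry_sq:
  assumes lam: "lam > 0" and r: "dist_r x y > 0" and i: "i < 2*Nbb+1" and j: "j < 2*Nmb+1"
  shows "(cmod (J_psi lam Nbb Nmb x y psi $$ (i,j)))\<^sup>2 =
    ((1 / (dist_r x y)\<^sup>2 + (2 * pi / lam)\<^sup>2) * (lam / (4 * pi * dist_r x y))\<^sup>2 * (spacing lam)\<^sup>2 / (dist_r x y)\<^sup>2)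
    * (ant_idx Nmb j)\<^sup>2 * ((cos psi * y - sin psi * x) + (- spacing lam * cos psi) * ant_idx Nbb i)\<^sup>2"
proof -
  have "(cmod (J_psi lam Nbb Nmb x y psi $$ (i,j)))\<^sup>2 = (cmod (eta lam x y))\<^sup>2 * (cmod (chan lam x y psi (ant_idx Nbb i) (ant_idx Nmb j)))\<^sup>2
     * (ant_idx Nmb j * spacing lam * (cos psi * y - sin psi * x - ant_idx Nbb i * spacing lam * cos psi) / dist_r x y)\<^sup>2"
    by (simp only: Jpsi_entry[OF i j] norm_mult norm_of_real power_mult_distrib power2_abs)
  also have "\<dots> = ((1 / (dist_r x y)\<^sup>2 + (2 * pi / lam)\<^sup>2) * (lam / (4 * pi * dist_r x y))\<^sup>2 * (spacing lam)\<^sup>2 / (dist_r x y)\<^sup>2)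
    * (ant_idx Nmb j)\<^sup>2 * ((cos psi * y - sin psi * x) + (- spacing lam * cos psi) * ant_idx Nbb i)\<^sup>2"
    unfolding cmod_eta_sq cmod_chan[OF lam r] by (rule resh[OF r])
  finally show ?thesis .
qed

lemma frob_formula:
  assumes lam: "lam > 0" and r: "dist_r x y > 0"
  shows "frob_sq (J_psi lam Nbb Nmb x y psi) =
    ((1 / (dist_r x y)\<^sup>2 + (2 * pi / lam)\<^sup>2) * (lam / (4 * pi * dist_r x y))\<^sup>2 * (spacing lam)\<^sup>2 / (dist_r x y)\<^sup>2)
    * (real (2*Nbb+1) * (cos psi * y - sin psi * x)\<^sup>2 + (- spacing lam * cos psi)\<^sup>2 * real Nbb * (real Nbb + 1) * real (2*Nbb+1) / 3)
    * (real Nmb * (real Nmb + 1) * real (2*Nmb+1) / 3)"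
proof -
  let ?K = "((1 / (dist_r x y)\<^sup>2 + (2 * pi / lam)\<^sup>2) * (lam / (4 * pi * dist_r x y))\<^sup>2 * (spacing lam)\<^sup>2 / (dist_r x y)\<^sup>2)"
  let ?g = "cos psi * y - sin psi * x" and ?t = "- spacing lam * cos psi"
  have "frob_sq (J_psi lam Nbb Nmb x y psi) = (\<Sum>i<2*Nbb+1. \<Sum>j<2*Nmb+1. ?K * (ant_idx Nmb j)\<^sup>2 * (?g + ?t * ant_idx Nbb i)\<^sup>2)"
    unfolding frob_sq_def using Jpsi_carrier[of lam Nbb Nmb x y psi] entry_sq[OF lam r]
    by (intro sum.cong) auto
  also have "\<dots> = ?K * (\<Sum>i<2*Nbb+1. (?g + ?t * ant_idx Nbb i)\<^sup>2) * (\<Sum>j<2*Nmb+1. (0 + 1 * ant_idx Nmb j)\<^sup>2)"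
  proof -
    have "(\<Sum>i<2*Nbb+1. \<Sum>j<2*Nmb+1. ?K * (ant_idx Nmb j)\<^sup>2 * (?g + ?t * ant_idx Nbb i)\<^sup>2)
      = (\<Sum>i<2*Nbb+1. ?K * (?g + ?t * ant_idx Nbb i)\<^sup>2 * (\<Sum>j<2*Nmb+1. (0 + 1 * ant_idx Nmb j)\<^sup>2))"
      by (intro sum.cong refl) (simp only: sum_distrib_left, intro sum.cong refl, simp)
    also have "\<dots> = ?K * (\<Sum>i<2*Nbb+1. (?g + ?t * ant_idx Nbb i)\<^sup>2) * (\<Sum>j<2*Nmb+1. (0 + 1 * ant_idx Nmb j)\<^sup>2)"
      by (simp only: sum_distrib_right[symmetric] sum_distrib_left[symmetric])
    finally show ?thesis .
  qed
  also have "\<dots> = ?K * (real (2*Nbb+1) * ?g\<^sup>2 + ?t\<^sup>2 * real Nbb * (real Nbb + 1) * real (2*Nbb+1) / 3)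
      * (real Nmb * (real Nmb + 1) * real (2*Nmb+1) / 3)"
    unfolding sumsq_sym by simp
  finally show ?thesis .
qed

lemma frob_T:
  assumes lam: "lam > 0" and r: "dist_r x y > 0" and xr: "x = dist_r x y * cos theta" and yr: "y = dist_r x y * sin theta"
    and s0: "sin (theta - psi) \<noteq> 0" and Nm1: "Nmb \<ge> 1"
  shows "frob_sq (J_psi lam Nbb Nmb x y psi) =
    real (2*Nbb+1) * real (2*Nmb+1) * (aperture lam Nmb * \<bar>sin (theta - psi)\<bar>)\<^sup>2 / (48 * (dist_r x y)\<^sup>2)
      * (1 + 2 / (real (2*Nmb+1) - 1))
      * (1 + ((lam\<^sup>2 / (4 * pi\<^sup>2 * (dist_r x y)\<^sup>2))
         + ((spacing lam)\<^sup>2 * (cos psi)\<^sup>2 * real Nbb * (real Nbb + 1) / (3 * (dist_r x y)\<^sup>2 * (sin (theta - psi))\<^sup>2))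
         + (lam\<^sup>2 / (4 * pi\<^sup>2 * (dist_r x y)\<^sup>2)) * ((spacing lam)\<^sup>2 * (cos psi)\<^sup>2 * real Nbb * (real Nbb + 1) / (3 * (dist_r x y)\<^sup>2 * (sin (theta - psi))\<^sup>2))))"
proof -
  define r' where "r' = dist_r x y"
  define s where "s = sin (theta - psi)"
  define d where "d = spacing lam"
  define a where "a = lam\<^sup>2 / (4 * pi\<^sup>2 * r'\<^sup>2)"
  define b where "b = d\<^sup>2 * (cos psi)\<^sup>2 * real Nbb * (real Nbb + 1) / (3 * r'\<^sup>2 * s\<^sup>2)"
  have rp: "r' > 0" using r r'_def by simp
  have sp: "s \<noteq> 0" using s0 s_def by simp
  have dd: "d = lam / 2" unfolding d_def spacing_def ..
  have g: "cos psi * y - sin psi * x = r' * s"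
    unfolding s_def r'_def by (subst xr, subst yr) (simp add: sin_diff algebra_simps)
  have K: "(1 / r'\<^sup>2 + (2 * pi / lam)\<^sup>2) * (lam / (4 * pi * r'))\<^sup>2 * d\<^sup>2 / r'\<^sup>2 = d\<^sup>2 * (1 + a) / (4 * r'^4)"
    unfolding a_def using lam rp pi_gt_zero by (simp add: field_simps power2_eq_square power4_eq_xxxx)
  have B: "real (2*Nbb+1) * (r' * s)\<^sup>2 + (- d * cos psi)\<^sup>2 * real Nbb * (real Nbb + 1) * real (2*Nbb+1) / 3
      = real (2*Nbb+1) * r'\<^sup>2 * s\<^sup>2 * (1 + b)"
    unfolding b_def using rp sp by (simp add: field_simps power2_eq_square)
  have ap: "aperture lam Nmb = 2 * real Nmb * d" unfolding aperture_def d_def by simp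
  have F: "frob_sq (J_psi lam Nbb Nmb x y psi) = d\<^sup>2 * (1 + a) / (4 * r'^4) * (real (2*Nbb+1) * r'\<^sup>2 * s\<^sup>2 * (1 + b))
      * (real Nmb * (real Nmb + 1) * real (2*Nmb+1) / 3)"
    using frob_formula[OF lam r, of Nbb Nmb psi] unfolding r'_def[symmetric] d_def[symmetric] g K B .
  have N: "real Nmb > 0" using Nm1 by simp
  have D2: "(2 * real Nmb * d * \<bar>s\<bar>)\<^sup>2 = 4 * (real Nmb)\<^sup>2 * d\<^sup>2 * s\<^sup>2"
    by (simp add: power_mult_distrib power2_abs)
  have M: "1 + 2 / (real (2*Nmb+1) - 1) = (real Nmb + 1) / real Nmb" using N by (simp add: field_simps)
  have E: "1 + (a + b + a * b) = (1 + a) * (1 + b)" by (simp add: algebra_simps)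
  show ?thesis unfolding r'_def[symmetric] s_def[symmetric] d_def[symmetric] a_def[symmetric] b_def[symmetric] F ap D2 M E
    using N rp sp by (simp add: field_simps power2_eq_square power4_eq_xxxx)
qed

lemma bnd:
  assumes n: "(n::real) \<ge> 1" and q: "q > 0" and h: "q * (0.3844 * n^3) \<le> 1"
  shows "q * n \<le> 3" "q * (n * (n + 1)) \<le> 6 / n"
proof -
  have n2: "n^2 \<ge> 1" using n by (simp add: one_le_power)
  have "q * n * (0.3844 * n^2) \<le> 1" using h by (simp add: power3_eq_cube power2_eq_square mult_ac)
  moreover have "q * n * (0.3844 * n^2) \<ge> q * n * 0.3844" using n2 q n
    by (intro mult_left_mono) auto
  ultimately have "q * n * 0.3844 \<le> 1" by (rule order_trans[rotated])
  then show "q * n \<le> 3" by simp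
  have "q * (n * (n + 1)) \<le> q * (2 * n^2)" using q n by (intro mult_left_mono) (auto simp: power2_eq_square)
  moreover have "q * (2 * n^2) * n \<le> 6" using h by (simp add: power3_eq_cube power2_eq_square mult_ac)
  ultimately have "q * (n * (n + 1)) * n \<le> 6"
    using mult_right_mono[of "q * (n * (n + 1))" "q * (2 * n^2)" n] n by linarith
  then show "q * (n * (n + 1)) \<le> 6 / n" using n by (simp add: field_simps)
qed

lemma eps_bound:
  assumes lam: "lam > 0" and r: "dist_r x y > 0" and N1: "Nbb \<ge> 1"
    and fr: "dist_r x y > fresnel_dist lam Nbb" and c: "c > 0" and sc: "\<bar>sin (theta - psi)\<bar> \<ge> c"
  defines "\<epsilon> \<equiv> (lam\<^sup>2 / (4 * pi\<^sup>2 * (dist_r x y)\<^sup>2))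
         + ((spacing lam)\<^sup>2 * (cos psi)\<^sup>2 * real Nbb * (real Nbb + 1) / (3 * (dist_r x y)\<^sup>2 * (sin (theta - psi))\<^sup>2))
         + (lam\<^sup>2 / (4 * pi\<^sup>2 * (dist_r x y)\<^sup>2)) * ((spacing lam)\<^sup>2 * (cos psi)\<^sup>2 * real Nbb * (real Nbb + 1) / (3 * (dist_r x y)\<^sup>2 * (sin (theta - psi))\<^sup>2))"
  shows "\<bar>\<epsilon>\<bar> \<le> (9 + 12 / c\<^sup>2) / real (2 * Nbb + 1)"
proof -
  define R where "R = dist_r x y"
  define n where "n = real Nbb"
  define s where "s = sin (theta - psi)"
  define q where "q = lam\<^sup>2 / R\<^sup>2"
  have Rp: "R > 0" using r R_def by simp
  have n1: "n \<ge> 1" using N1 n_def by simp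
  have qp: "q > 0" unfolding q_def using lam Rp by simp
  have ap: "aperture lam Nbb = n * lam" unfolding aperture_def spacing_def n_def by simp
  have X: "aperture lam Nbb ^ 3 / lam = n^3 * lam\<^sup>2" unfolding ap using lam by (simp add: power3_eq_cube power2_eq_square field_simps)
  have fr': "R > 0.62 * sqrt (n^3 * lam\<^sup>2)" using fr unfolding fresnel_dist_def X R_def .
  have nl0: "n^3 * lam\<^sup>2 \<ge> 0" by (intro mult_nonneg_nonneg) (use n1 in auto)
  have sq0: "sqrt (n^3 * lam\<^sup>2) \<ge> 0" using nl0 by simp
  have "R\<^sup>2 > (0.62 * sqrt (n^3 * lam\<^sup>2))\<^sup>2"
    using fr' sq0 by (intro power_strict_mono) auto
  also have "(0.62 * sqrt (n^3 * lam\<^sup>2))\<^sup>2 = 0.3844 * (n^3 * lam\<^sup>2)"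
  proof -
    have "n^3 * lam\<^sup>2 \<ge> 0" by (intro mult_nonneg_nonneg) (use n1 in auto)
    then show ?thesis by (simp only: power_mult_distrib real_sqrt_pow2) (simp add: power2_eq_square)
  qed
  finally have R2: "R\<^sup>2 > 0.3844 * (n^3 * lam\<^sup>2)" .
  have hq: "q * (0.3844 * n^3) \<le> 1" unfolding q_def using R2 Rp by (simp add: field_simps)
  note B = bnd[OF n1 qp hq]
  define a where "a = lam\<^sup>2 / (4 * pi\<^sup>2 * R\<^sup>2)"
  define b where "b = (spacing lam)\<^sup>2 * (cos psi)\<^sup>2 * n * (n + 1) / (3 * R\<^sup>2 * s\<^sup>2)"
  have eps: "\<epsilon> = a + b + a * b" unfolding \<epsilon>_def a_def b_def R_def n_def s_def ..
  have "pi \<ge> 1" using pi_ge_two by simp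
  then have "pi\<^sup>2 \<ge> 1" by (simp add: one_le_power)
  then have pi1: "4 * pi\<^sup>2 \<ge> 1" by linarith
  have a_eq: "a = q / (4 * pi\<^sup>2)" unfolding a_def q_def by (simp add: field_simps)
  have a0: "a \<ge> 0" unfolding a_eq using qp by simp
  have aq: "a \<le> q" unfolding a_eq using qp pi1 by (simp add: divide_le_eq mult_le_cancel_left1 less_imp_le)
  have "c\<^sup>2 \<le> \<bar>s\<bar>\<^sup>2" using power_mono[OF sc, of 2] c unfolding s_def by simp
  then have s2: "s\<^sup>2 \<ge> c\<^sup>2" by simp
  have "c\<^sup>2 > 0" using c by simp
  then have s2p: "s\<^sup>2 > 0" using s2 by linarith
  have "(sin psi)\<^sup>2 \<ge> 0" by simp
  then have cp: "(cos psi)\<^sup>2 \<le> 1" using sin_cos_squared_add[of psi] by linarith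
  have b_eq: "b = q * (cos psi)\<^sup>2 * (n * (n + 1)) / (12 * s\<^sup>2)"
    unfolding b_def q_def spacing_def using Rp by (simp add: field_simps power2_eq_square)
  have b0: "b \<ge> 0" unfolding b_eq using qp n1 s2p by simp
  have "b \<le> q * (n * (n + 1)) / (12 * s\<^sup>2)" unfolding b_eq
    using qp n1 s2p cp by (intro divide_right_mono) (auto intro!: mult_left_le simp: mult.assoc mult.commute[of _ "(cos psi)\<^sup>2"])
  also have "\<dots> \<le> q * (n * (n + 1)) / (12 * c\<^sup>2)"
    using qp n1 s2 c s2p by (intro divide_left_mono) auto
  also have "\<dots> \<le> (6 / n) / (12 * c\<^sup>2)" using B(2) c by (intro divide_right_mono) auto
  also have "\<dots> = 1 / (2 * n * c\<^sup>2)" using n1 by (simp add: field_simps)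
  finally have bb: "b \<le> 1 / (2 * n * c\<^sup>2)" .
  have "a * n \<le> q * n" using aq n1 by (intro mult_right_mono) auto
  then have "a * n \<le> 3" using B(1) by linarith
  then have a3n: "a \<le> 3 / n" using n1 by (simp add: field_simps)
  have "3 / n \<le> 3" using n1 by (simp add: field_simps)
  then have a3: "a \<le> 3" using a3n by linarith
  have ab: "a * b \<le> 3 * (1 / (2 * n * c\<^sup>2))" using a3 bb a0 b0 by (intro mult_mono) auto
  have "\<epsilon> \<le> 3 / n + 1 / (2 * n * c\<^sup>2) + 3 * (1 / (2 * n * c\<^sup>2))" using eps a3n bb ab by linarith
  also have "\<dots> = (3 + 2 / c\<^sup>2) / n" using n1 c by (simp add: field_simps)
  also have "\<dots> \<le> (3 + 2 / c\<^sup>2) * 3 / real (2 * Nbb + 1)"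
  proof -
    have i1: "1 / n \<le> 3 / real (2 * Nbb + 1)" using n1 unfolding n_def by (simp add: field_simps)
    have k0: "3 + 2 / c\<^sup>2 \<ge> 0" using c by (simp add: add_nonneg_nonneg)
    have "(3 + 2 / c\<^sup>2) * (1 / n) \<le> (3 + 2 / c\<^sup>2) * (3 / real (2 * Nbb + 1))"
      by (rule mult_left_mono[OF i1 k0])
    then show ?thesis by simp
  qed
  also have "\<dots> \<le> (9 + 12 / c\<^sup>2) / real (2 * Nbb + 1)"
    using c by (intro divide_right_mono) (auto simp: field_simps)
  finally have up: "\<epsilon> \<le> (9 + 12 / c\<^sup>2) / real (2 * Nbb + 1)" .
  have "\<epsilon> \<ge> 0" using eps a0 b0 by simp
  then show ?thesis using up by simp
qed

lemma scale_id: "(s2::real) > 0 \<Longrightarrow> r > 0 \<Longrightarrow> Nm > 0 \<Longrightarrow>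
  2 * Pm / (s2 * Nm) * (Nb * Nm * D / (48 * r\<^sup>2) * F * G) = Pm * Nb * D / (24 * s2 * r\<^sup>2) * F * G"
  by (simp add: field_simps)

theorem proposition4:
  fixes c :: real
  assumes "c > 0"
  shows "\<exists>C::real. \<forall>(lam::real) (Nbb::nat) (Nmb::nat) (x::real) (y::real) (psi::real) (theta::real).
    (lam > 0 \<and> Nbb \<ge> 1 \<and> Nmb \<ge> 1 \<and> dist_r x y > 0
     \<and> x = dist_r x y * cos theta \<and> y = dist_r x y * sin theta
     \<and> aperture lam Nmb < aperture lam Nbb
     \<and> dist_r x y > fresnel_dist lam Nbb
     \<and> \<bar>sin (theta - psi)\<bar> \<ge> c) \<longrightarrow>
    (let Nb = real (2 * Nbb + 1); Nm = real (2 * Nmb + 1); r = dist_r x y;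
         Deff = aperture lam Nmb * \<bar>sin (theta - psi)\<bar>;
         J = J_psi lam Nbb Nmb x y psi in
     \<exists>\<epsilon>::real. \<bar>\<epsilon>\<bar> \<le> C / Nb
       \<and> frob_sq J = Nb * Nm * Deff\<^sup>2 / (48 * r\<^sup>2) * (1 + 2 / (Nm - 1)) * (1 + \<epsilon>)
       \<and> (\<forall>(Q::complex mat) (Nrf::nat) (Pm::real) (s2::real).
            Q \<in> carrier_mat Nrf (2 * Nbb + 1) \<and> full_row_rank Q \<and> Pm > 0 \<and> s2 > 0 \<longrightarrow>
            2 * Pm / (s2 * Nm) * frob_sq (proj_Q Q * J) \<le> 2 * Pm / (s2 * Nm) * frob_sq J
            \<and> 2 * Pm / (s2 * Nm) * frob_sq J
                = Pm * Nb * Deff\<^sup>2 / (24 * s2 * r\<^sup>2) * (1 + 2 / (Nm - 1)) * (1 + \<epsilon>)))"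
proof -
  show ?thesis
  proof (rule exI[of _ "9 + 12 / c\<^sup>2"], intro allI impI)
    fix lam :: real and Nbb Nmb :: nat and x y psi theta :: real
    assume H: "lam > 0 \<and> Nbb \<ge> 1 \<and> Nmb \<ge> 1 \<and> dist_r x y > 0
     \<and> x = dist_r x y * cos theta \<and> y = dist_r x y * sin theta
     \<and> aperture lam Nmb < aperture lam Nbb
     \<and> dist_r x y > fresnel_dist lam Nbb
     \<and> \<bar>sin (theta - psi)\<bar> \<ge> c"
    then have lam: "lam > 0" and N1: "Nbb \<ge> 1" and M1: "Nmb \<ge> 1" and r: "dist_r x y > 0"
      and xr: "x = dist_r x y * cos theta" and yr: "y = dist_r x y * sin theta"
      and fr: "dist_r x y > fresnel_dist lam Nbb" and sc: "\<bar>sin (theta - psi)\<bar> \<ge> c" by auto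
    have s0: "sin (theta - psi) \<noteq> 0" using sc assms by auto
    define \<epsilon> where "\<epsilon> = (lam\<^sup>2 / (4 * pi\<^sup>2 * (dist_r x y)\<^sup>2))
         + ((spacing lam)\<^sup>2 * (cos psi)\<^sup>2 * real Nbb * (real Nbb + 1) / (3 * (dist_r x y)\<^sup>2 * (sin (theta - psi))\<^sup>2))
         + (lam\<^sup>2 / (4 * pi\<^sup>2 * (dist_r x y)\<^sup>2)) * ((spacing lam)\<^sup>2 * (cos psi)\<^sup>2 * real Nbb * (real Nbb + 1) / (3 * (dist_r x y)\<^sup>2 * (sin (theta - psi))\<^sup>2))"
    have E1: "\<bar>\<epsilon>\<bar> \<le> (9 + 12 / c\<^sup>2) / real (2 * Nbb + 1)"
      unfolding \<epsilon>_def by (rule eps_bound[OF lam r N1 fr assms sc])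
    have E2: "frob_sq (J_psi lam Nbb Nmb x y psi) =
      real (2*Nbb+1) * real (2*Nmb+1) * (aperture lam Nmb * \<bar>sin (theta - psi)\<bar>)\<^sup>2 / (48 * (dist_r x y)\<^sup>2)
      * (1 + 2 / (real (2*Nmb+1) - 1)) * (1 + \<epsilon>)"
      unfolding \<epsilon>_def by (rule frob_T[OF lam r xr yr s0 M1])
    have E3: "2 * Pm / (s2 * real (2*Nmb+1)) * frob_sq (proj_Q Q * J_psi lam Nbb Nmb x y psi)
        \<le> 2 * Pm / (s2 * real (2*Nmb+1)) * frob_sq (J_psi lam Nbb Nmb x y psi)"
      if Q: "Q \<in> carrier_mat Nrf (2 * Nbb + 1)" and fq: "full_row_rank Q" and Pm: "Pm > 0" and s2: "s2 > 0"
      for Q :: "complex mat" and Nrf :: nat and Pm s2 :: real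
    proof -
      note PP = proj_props[OF Q fq]
      have "frob_sq (proj_Q Q * J_psi lam Nbb Nmb x y psi) \<le> frob_sq (J_psi lam Nbb Nmb x y psi)"
        by (rule frob_proj_le[OF PP(1) PP(2) PP(3) Jpsi_carrier])
      moreover have "2 * Pm / (s2 * real (2*Nmb+1)) \<ge> 0" using Pm s2 by simp
      ultimately show ?thesis by (rule mult_left_mono)
    qed
    have E4: "2 * Pm / (s2 * real (2*Nmb+1)) * frob_sq (J_psi lam Nbb Nmb x y psi)
        = Pm * real (2*Nbb+1) * (aperture lam Nmb * \<bar>sin (theta - psi)\<bar>)\<^sup>2 / (24 * s2 * (dist_r x y)\<^sup>2)
          * (1 + 2 / (real (2*Nmb+1) - 1)) * (1 + \<epsilon>)"
      if s2: "s2 > 0" for Pm s2 :: real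
      unfolding E2 by (rule scale_id[OF s2 r]) simp
    show "let Nb = real (2 * Nbb + 1); Nm = real (2 * Nmb + 1); r = dist_r x y;
         Deff = aperture lam Nmb * \<bar>sin (theta - psi)\<bar>;
         J = J_psi lam Nbb Nmb x y psi in
     \<exists>\<epsilon>::real. \<bar>\<epsilon>\<bar> \<le> (9 + 12 / c\<^sup>2) / Nb
       \<and> frob_sq J = Nb * Nm * Deff\<^sup>2 / (48 * r\<^sup>2) * (1 + 2 / (Nm - 1)) * (1 + \<epsilon>)
       \<and> (\<forall>(Q::complex mat) (Nrf::nat) (Pm::real) (s2::real).
            Q \<in> carrier_mat Nrf (2 * Nbb + 1) \<and> full_row_rank Q \<and> Pm > 0 \<and> s2 > 0 \<longrightarrow>
            2 * Pm / (s2 * Nm) * frob_sq (proj_Q Q * J) \<le> 2 * Pm / (s2 * Nm) * frob_sq J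
            \<and> 2 * Pm / (s2 * Nm) * frob_sq J
                = Pm * Nb * Deff\<^sup>2 / (24 * s2 * r\<^sup>2) * (1 + 2 / (Nm - 1)) * (1 + \<epsilon>))"
      unfolding Let_def
      using E1 E2 E3 E4 by blast
  qed
qed

end
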